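(* Let $M$ be a nontrivial monoid in $\mathcal{C}$ and let $V=\mathbb{R}\otimes_\mathbb{Z}\mathrm{gp}(M)$. The following are equivalent: (a) $M$ is an HFM; (b) every face submonoid of $M$ is an HFM; (c) $\dim\mathsf{conv}_V(\mathcal{A}(M))<\dim\mathsf{cone}_V(M)$.
   Context: Convention: all monoids are commutative, cancellative, and reduced, written additively; $M^\bullet=M\setminus\{0\}$; atoms $\mathcal{A}(M)=M^\bullet\setminus(M^\bullet+M^\bullet)$. $\mathcal{C}$ is the class of monoids isomorphic to a submonoid of a free commutative monoid of finite rank (equivalently, of $(\mathbb{N}^d,+)$). $M$ is regarded as a submonoid of $V=\mathbb{R}\otimes_\mathbb{Z}\mathrm{gp}(M)$; $\mathsf{cone}_V(M)$ is the set of finite nonnegative linear combinations of elements of $M$ and $\mathsf{conv}_V$ denotes convex hull; dimensions are dimensions of affine hulls. A face of a cone $C$ is a cone $F\subseteq C$ such that whenever $x,y\in C$ and $F$ meets the open segment between $x$ and $y$, then $x,y\in F$; a face submonoid of $M$ is $M\cap F$ for a face $F$ of $\mathsf{cone}_V(M)$. A factorization of $x\in M$ is a formal sum (multiset) of atoms summing to $x$; its length is the number of atoms counted with multiplicity. $M$ is an HFM (half-factorial monoid) if every element is a sum of atoms and any two factorizations of the same nonzero element have the same length. *)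

theory Defs
  imports "HOL-Analysis.Analysis" "HOL-Library.Multiset"
begin

text \<open>Members of the class C are represented (up to isomorphism)
as submonoids of nat^'n, 'n a finite index type (free commutative monoid of
finite rank).\<close>

definition submonoid :: "'a::comm_monoid_add set \<Rightarrow> bool" where
  "submonoid M \<longleftrightarrow> 0 \<in> M \<and> (\<forall>x\<in>M. \<forall>y\<in>M. x + y \<in> M)"

definition atoms :: "'a::comm_monoid_add set \<Rightarrow> 'a set" where
  "atoms M = {a \<in> M - {0}. \<not> (\<exists>x\<in>M - {0}. \<exists>y\<in>M - {0}. a = x + y)}"

definition factorization :: "'a::comm_monoid_add set \<Rightarrow> 'a \<Rightarrow> 'a multiset \<Rightarrow> bool" where
  "factorization M x F \<longleftrightarrow> set_mset F \<subseteq> atoms M \<and> sum_mset F = x"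

definition HFM :: "'a::comm_monoid_add set \<Rightarrow> bool" where
  "HFM M \<longleftrightarrow> (\<forall>x\<in>M. \<exists>F. factorization M x F) \<and>
     (\<forall>x\<in>M - {0}. \<forall>F G. factorization M x F \<longrightarrow> factorization M x G \<longrightarrow> size F = size G)"

text \<open>The canonical embedding nat^'n into real^'n; R tensor gp(M) is identified
with the real span of the image of M.\<close>
definition emb :: "nat ^ 'n \<Rightarrow> real ^ 'n" where
  "emb x = (\<chi> i. real (x $ i))"

definition cone_of :: "('b::real_vector) set \<Rightarrow> 'b set" where
  "cone_of S = {y. \<exists>T c. finite T \<and> T \<subseteq> S \<and> (\<forall>x\<in>T. c x \<ge> 0) \<and> y = (\<Sum>x\<in>T. c x *\<^sub>R x)}"

definition cone_face :: "('b::real_vector) set \<Rightarrow> 'b set \<Rightarrow> bool" where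
  "cone_face F C \<longleftrightarrow> F \<noteq> {} \<and> cone F \<and> F face_of C"

definition face_submonoid :: "(nat ^ 'n) set \<Rightarrow> (nat ^ 'n) set \<Rightarrow> bool" where
  "face_submonoid N M \<longleftrightarrow> (\<exists>F. cone_face F (cone_of (emb ` M)) \<and> N = {x \<in> M. emb x \<in> F})"

end

theory Submission
  imports Defs
begin

lemma rat_functional:
  "\<exists>\<phi> :: real \<Rightarrow> rat. (\<forall>x y. \<phi> (x+y) = \<phi> x + \<phi> y) \<and> (\<forall>q x. \<phi> (of_rat q * x) = q * \<phi> x) \<and> \<phi> 1 = 1"
proof -
  interpret Q: vector_space "\<lambda>q x. of_rat q * (x::real)"
    by unfold_locales (auto simp: algebra_simps of_rat_add of_rat_mult)
  define B where "B = Q.extend_basis {1}"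
  have ind1: "Q.independent {1::real}"
    by (rule Q.independent_insertI) (auto simp: Q.independent_empty)
  have indB: "Q.independent B" and spB: "Q.span B = UNIV" and oneB: "1 \<in> B"
    using Q.independent_extend_basis[OF ind1] Q.span_extend_basis[OF ind1]
      Q.extend_basis_superset[OF ind1] by (auto simp: B_def)
  show ?thesis
  proof (intro exI conjI allI)
    fix x y :: real
    show "Q.representation B (x+y) 1 = Q.representation B x 1 + Q.representation B y 1"
      using Q.representation_add[OF indB] spB by auto
  next
    fix q :: rat and x :: real
    show "Q.representation B (of_rat q * x) 1 = q * Q.representation B x 1"
      using Q.representation_scale[OF indB, of x q] spB by auto
  next
    show "Q.representation B 1 1 = 1"
      using Q.representation_basis[OF indB oneB] by auto
  qed
qed

lemma phi_sum:
  assumes add: "\<forall>x y. \<phi> (x+y) = \<phi> x + (\<phi> y :: rat)"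
  shows "\<phi> (\<Sum>a\<in>T. f a) = (\<Sum>a\<in>T. \<phi> (f a))"
proof -
  have z: "\<phi> 0 = 0" using add[rule_format, of 0 0] by simp
  show ?thesis
    by (induction T rule: infinite_finite_induct) (auto simp: z add)
qed

lemma common_denom:
  fixes r :: "'a \<Rightarrow> rat"
  assumes "finite T"
  shows "\<exists>D::int. D > 0 \<and> (\<forall>a\<in>T. \<exists>k::int. of_int D * r a = of_int k)"
  using assms
proof (induction T rule: finite_induct)
  case empty
  then show ?case by (intro exI[of _ 1]) auto
next
  case (insert b T)
  then obtain D where D: "D > 0" "\<forall>a\<in>T. \<exists>k::int. of_int D * r a = of_int k" by blast
  obtain n d where nd: "quotient_of (r b) = (n, d)" by (cases "quotient_of (r b)")
  have d: "d > 0" using quotient_of_denom_pos[OF nd] .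
  have rb: "r b = of_int n / of_int d" using quotient_of_div[OF nd] .
  have 1: "D * d > 0" using D d by simp
  have 2: "\<exists>k::int. of_int (D * d) * r a = of_int k" if "a \<in> insert b T" for a
  proof (cases "a = b")
    case True
    then show ?thesis using d rb by (intro exI[of _ "D * n"]) simp
  next
    case False
    have "a \<in> T" using that False by simp
    then obtain k where "of_int D * r a = of_int k" using D(2) by blast
    then show ?thesis by (intro exI[of _ "d * k"]) (metis mult.assoc mult.commute of_int_mult)
  qed
  show ?case using 1 2 by blast
qed

lemma emb_add: "emb (x + y) = emb x + emb y"
  by (simp add: emb_def vec_eq_iff)

lemma emb_0[simp]: "emb 0 = 0"
  by (simp add: emb_def vec_eq_iff)

lemma emb_inj: "inj emb"
  by (auto simp: inj_def emb_def vec_eq_iff)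

lemma emb_sum_mset: "emb (sum_mset F) = sum_mset (image_mset emb F)"
  by (induction F) (auto simp: emb_add)

lemma vsum_pos: "(x::nat^'n) \<noteq> 0 \<Longrightarrow> (\<Sum>i\<in>UNIV. x$i) > 0"
proof -
  assume "x \<noteq> 0"
  then obtain i where i: "x$i \<noteq> 0" by (auto simp: vec_eq_iff)
  have "x$i \<le> (\<Sum>i\<in>UNIV. x$i)" by (rule member_le_sum) auto
  then show ?thesis using i by simp
qed

lemma vsum_add: "(\<Sum>i\<in>UNIV. (x+y::nat^'n)$i) = (\<Sum>i\<in>UNIV. x$i) + (\<Sum>i\<in>UNIV. y$i)"
  by (simp add: sum.distrib)

lemma atomic:
  fixes M :: "(nat ^ 'n) set"
  assumes sm: "submonoid M"
  shows "x \<in> M \<Longrightarrow> \<exists>F. factorization M x F"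
proof (induction "\<Sum>i\<in>UNIV. x$i" arbitrary: x rule: less_induct)
  case (less x)
  show ?case
  proof (cases "x = 0")
    case True then show ?thesis by (intro exI[of _ "{#}"]) (auto simp: factorization_def)
  next
    case False
    show ?thesis
    proof (cases "x \<in> atoms M")
      case True then show ?thesis
        by (intro exI[of _ "{#x#}"]) (auto simp: factorization_def)
    next
      case na: False
      then obtain y z where yz: "y \<in> M - {0}" "z \<in> M - {0}" "x = y + z"
        using less.prems False by (auto simp: atoms_def)
      have l1: "(\<Sum>i\<in>UNIV. y$i) < (\<Sum>i\<in>UNIV. x$i)" and l2: "(\<Sum>i\<in>UNIV. z$i) < (\<Sum>i\<in>UNIV. x$i)"
        using vsum_pos[of y] vsum_pos[of z] yz by (auto simp: sum.distrib)
      have "\<exists>F. factorization M y F" using less.hyps[OF l1] yz by simp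
      then obtain F where F: "factorization M y F" ..
      have "\<exists>G. factorization M z G" using less.hyps[OF l2] yz by simp
      then obtain G where G: "factorization M z G" ..
      have "factorization M x (F + G)" using F G yz by (auto simp: factorization_def)
      then show ?thesis ..
    qed
  qed
qed

lemma sum_mset_in:
  assumes "submonoid M" "set_mset F \<subseteq> M"
  shows "sum_mset F \<in> M"
  using assms by (induction F) (auto simp: submonoid_def)

lemma atoms_sub: "atoms M \<subseteq> M" by (auto simp: atoms_def)

lemma fact_in:
  assumes "submonoid M" "factorization M x F"
  shows "x \<in> M"
  using sum_mset_in[OF assms(1), of F] assms atoms_sub by (auto simp: factorization_def)

lemma sum_mset_count_nat:
  fixes f :: "'a \<Rightarrow> nat"
  assumes "finite T" "set_mset F \<subseteq> T"
  shows "sum_mset (image_mset f F) = (\<Sum>a\<in>T. count F a * f a)"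
  using assms(2)
proof (induction F)
  case empty then show ?case by simp
next
  case (add b F)
  have "(\<Sum>a\<in>T. count (add_mset b F) a * f a) = (\<Sum>a\<in>T. count F a * f a + (if a = b then f a else 0))"
    by (intro sum.cong) auto
  also have "\<dots> = (\<Sum>a\<in>T. count F a * f a) + f b"
    using add.prems assms(1) by (simp add: sum.distrib)
  finally show ?case using add by simp
qed

lemma sum_mset_count_real:
  fixes f :: "'a \<Rightarrow> 'b::real_vector"
  assumes "finite T" "set_mset F \<subseteq> T"
  shows "sum_mset (image_mset f F) = (\<Sum>a\<in>T. real (count F a) *\<^sub>R f a)"
  using assms(2)
proof (induction F)
  case empty then show ?case by simp
next
  case (add b F)
  have "(\<Sum>a\<in>T. real (count (add_mset b F) a) *\<^sub>R f a) = (\<Sum>a\<in>T. real (count F a) *\<^sub>R f a + (if a = b then f a else 0))"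
    by (intro sum.cong) (auto simp: scaleR_add_left)
  also have "\<dots> = (\<Sum>a\<in>T. real (count F a) *\<^sub>R f a) + f b"
    using add.prems assms(1) by (simp add: sum.distrib)
  finally have "(\<Sum>a\<in>T. real (count (add_mset b F) a) *\<^sub>R f a) = sum_mset (image_mset f F) + f b"
    using add by simp
  moreover have "sum_mset (image_mset f (add_mset b F)) = sum_mset (image_mset f F) + f b"
    by (simp add: add.commute)
  ultimately show ?case by simp
qed

lemma size_count:
  assumes "finite T" "set_mset F \<subseteq> T"
  shows "size F = (\<Sum>a\<in>T. count F a)"
  using assms(2)
proof (induction F)
  case empty then show ?case by simp
next
  case (add b F)
  have "(\<Sum>a\<in>T. count (add_mset b F) a) = (\<Sum>a\<in>T. count F a + (if a = b then 1 else 0))"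
    by (intro sum.cong) auto
  also have "\<dots> = (\<Sum>a\<in>T. count F a) + 1"
    using add.prems assms(1) by (simp add: sum.distrib)
  finally show ?case using add by simp
qed

lemma sum_mset_comp: "(sum_mset F :: nat^'n) $ j = sum_mset (image_mset (\<lambda>a. a $ j) F)"
  by (induction F) auto

lemma hfm_of_not_aff:
  fixes M :: "(nat ^ 'n) set"
  assumes sm: "submonoid M" and na: "0 \<notin> affine hull (emb ` atoms M)"
  shows "HFM M"
proof -
  have "size F = size G" if x: "x \<in> M - {0}" and F: "factorization M x F" and G: "factorization M x G" for x F G
  proof (rule ccontr)
    assume ne: "size F \<noteq> size G"
    define T where "T = set_mset F \<union> set_mset G"
    have fT: "finite T" by (simp add: T_def)
    have TA: "T \<subseteq> atoms M" using F G by (auto simp: T_def factorization_def)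
    have FT: "set_mset F \<subseteq> T" and GT: "set_mset G \<subseteq> T" by (auto simp: T_def)
    have Fx: "sum_mset F = x" and Gx: "sum_mset G = x" using F G by (auto simp: factorization_def)
    define d where "d = real (size F) - real (size G)"
    have d0: "d \<noteq> 0" using ne by (simp add: d_def)
    define u where "u a = (real (count F a) - real (count G a)) / d" for a
    have sF: "real (size F) = (\<Sum>a\<in>T. real (count F a))"
      using size_count[OF fT FT] by (simp add: of_nat_sum)
    have sG: "real (size G) = (\<Sum>a\<in>T. real (count G a))"
      using size_count[OF fT GT] by (simp add: of_nat_sum)
    have s1: "(\<Sum>a\<in>T. u a) = 1"
    proof -
      have "(\<Sum>a\<in>T. u a) = (\<Sum>a\<in>T. real (count F a) - real (count G a)) / d"
        by (simp add: u_def sum_divide_distrib)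
      also have "\<dots> = d / d" by (simp add: sum_subtractf sF sG d_def)
      finally show ?thesis using d0 by simp
    qed
    have eF: "(\<Sum>a\<in>T. real (count F a) *\<^sub>R emb a) = emb x"
      using sum_mset_count_real[OF fT FT, of emb] emb_sum_mset[of F] Fx by simp
    have eG: "(\<Sum>a\<in>T. real (count G a) *\<^sub>R emb a) = emb x"
      using sum_mset_count_real[OF fT GT, of emb] emb_sum_mset[of G] Gx by simp
    have s2: "(\<Sum>a\<in>T. u a *\<^sub>R emb a) = 0"
    proof -
      have "(\<Sum>a\<in>T. u a *\<^sub>R emb a) = (\<Sum>a\<in>T. (1/d) *\<^sub>R (real (count F a) *\<^sub>R emb a - real (count G a) *\<^sub>R emb a))"
      proof (intro sum.cong refl)
        fix a
        have "u a *\<^sub>R emb a = (1/d) *\<^sub>R ((real (count F a) - real (count G a)) *\<^sub>R emb a)"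
          by (simp add: u_def)
        then show "u a *\<^sub>R emb a = (1/d) *\<^sub>R (real (count F a) *\<^sub>R emb a - real (count G a) *\<^sub>R emb a)"
          by (simp only: scaleR_diff_left)
      qed
      also have "\<dots> = (1/d) *\<^sub>R ((\<Sum>a\<in>T. real (count F a) *\<^sub>R emb a) - (\<Sum>a\<in>T. real (count G a) *\<^sub>R emb a))"
        by (simp only: scaleR_diff_right sum_subtractf scaleR_sum_right)
      also have "\<dots> = 0" using eF eG by simp
      finally show ?thesis .
    qed
    have injT: "inj_on emb T" by (rule inj_on_subset[OF emb_inj]) simp
    define w where "w v = u (inv emb v)" for v
    have w1: "sum w (emb ` T) = 1"
      using s1 by (simp add: sum.reindex[OF injT] w_def inv_f_f[OF emb_inj])
    have w2: "(\<Sum>v\<in>emb ` T. w v *\<^sub>R v) = 0"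
      using s2 by (simp add: sum.reindex[OF injT] w_def inv_f_f[OF emb_inj])
    have "0 \<in> affine hull (emb ` T)"
    proof -
      have "\<exists>u. sum u (emb ` T) = 1 \<and> (\<Sum>v\<in>emb ` T. u v *\<^sub>R v) = 0" using w1 w2 by blast
      then show ?thesis by (simp add: affine_hull_finite fT)
    qed
    moreover have "affine hull (emb ` T) \<subseteq> affine hull (emb ` atoms M)"
      by (intro hull_mono image_mono TA)
    ultimately have "0 \<in> affine hull (emb ` atoms M)" by (rule subsetD[rotated])
    then show False using na by simp
  qed
  then show ?thesis unfolding HFM_def using atomic[OF sm] by blast
qed

lemma vec_add_eq_0: "(a::nat^'n) + b = 0 \<Longrightarrow> a = 0"
  by (simp add: vec_eq_iff)

lemma not_aff_of_hfm:
  fixes M :: "(nat ^ 'n) set"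
  assumes sm: "submonoid M" and h: "HFM M"
  shows "0 \<notin> affine hull (emb ` atoms M)"
proof
  assume "0 \<in> affine hull (emb ` atoms M)"
  then obtain S u where S: "finite S" "S \<noteq> {}" "S \<subseteq> emb ` atoms M" "sum u S = 1"
     "(\<Sum>v\<in>S. u v *\<^sub>R v) = 0"
    unfolding affine_hull_explicit by blast
  define T where "T = {a \<in> atoms M. emb a \<in> S}"
  have ST: "S = emb ` T" using S(3) by (auto simp: T_def)
  have injT: "inj_on emb T" by (rule inj_on_subset[OF emb_inj]) simp
  have fT: "finite T" using S(1) ST finite_imageD[OF _ injT] by simp
  have TA: "T \<subseteq> atoms M" by (auto simp: T_def)
  define c where "c a = u (emb a)" for a
  have c1: "(\<Sum>a\<in>T. c a) = 1" using S(4) by (simp add: ST sum.reindex[OF injT] c_def)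
  have c2: "(\<Sum>a\<in>T. c a *\<^sub>R emb a) = 0" using S(5) by (simp add: ST sum.reindex[OF injT] c_def)
  have c3: "(\<Sum>a\<in>T. c a * real (a $ j)) = 0" for j
  proof -
    have "(\<Sum>a\<in>T. c a *\<^sub>R emb a) $ j = 0" using c2 by simp
    then show ?thesis by (simp add: emb_def)
  qed
  obtain \<phi> :: "real \<Rightarrow> rat" where phadd: "\<forall>x y. \<phi> (x+y) = \<phi> x + \<phi> y"
    and phsc: "\<forall>q x. \<phi> (of_rat q * x) = q * \<phi> x" and ph1: "\<phi> 1 = 1"
    using rat_functional by blast
  define r where "r a = \<phi> (c a)" for a
  have ph0: "\<phi> 0 = 0" using phadd[rule_format, of 0 0] by simp
  have r1: "(\<Sum>a\<in>T. r a) = 1"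
    using phi_sum[OF phadd, of c T] c1 ph1 by (simp add: r_def)
  have r2: "(\<Sum>a\<in>T. of_nat (a $ j) * r a) = 0" for j
  proof -
    have "\<phi> (c a * real (a $ j)) = of_nat (a $ j) * r a" for a
    proof -
      have "c a * real (a $ j) = of_rat (of_nat (a $ j)) * c a" by (metis of_rat_of_nat_eq mult.commute)
      then have "\<phi> (c a * real (a $ j)) = \<phi> (of_rat (of_nat (a $ j)) * c a)" by (rule arg_cong)
      also have "\<dots> = of_nat (a $ j) * \<phi> (c a)" by (rule phsc[rule_format])
      finally show ?thesis by (simp add: r_def)
    qed
    then have "\<phi> (\<Sum>a\<in>T. c a * real (a $ j)) = (\<Sum>a\<in>T. of_nat (a $ j) * r a)"
      using phi_sum[OF phadd, of "\<lambda>a. c a * real (a $ j)" T] by simp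
    then show ?thesis using c3[of j] ph0 by simp
  qed
  obtain D :: int where D: "D > 0" "\<forall>a\<in>T. \<exists>k::int. of_int D * r a = of_int k"
    using common_denom[OF fT, of r] by blast
  then obtain e where e: "\<forall>a\<in>T. of_int D * r a = of_int (e a)"
    using bchoice[OF D(2)] by blast
  have e1: "(\<Sum>a\<in>T. e a) = D"
  proof -
    have "(of_int (\<Sum>a\<in>T. e a) :: rat) = (\<Sum>a\<in>T. of_int D * r a)"
      using e by (simp add: of_int_sum)
    also have "\<dots> = of_int D" using r1 by (simp add: sum_distrib_left[symmetric])
    finally show ?thesis by (simp only: of_int_eq_iff)
  qed
  have e2: "(\<Sum>a\<in>T. e a * int (a $ j)) = 0" for j
  proof -
    have "(of_int (\<Sum>a\<in>T. e a * int (a $ j)) :: rat) = (\<Sum>a\<in>T. of_int D * (of_nat (a $ j) * r a))"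
    proof -
      have "(of_int (\<Sum>a\<in>T. e a * int (a $ j)) :: rat) = (\<Sum>a\<in>T. of_int (e a) * of_nat (a $ j))"
        by (simp add: of_int_sum)
      also have "\<dots> = (\<Sum>a\<in>T. of_int D * (of_nat (a $ j) * r a))"
      proof (intro sum.cong refl)
        fix a assume "a \<in> T"
        then have "of_int (e a) = of_int D * r a" using e by simp
        then show "(of_int (e a) :: rat) * of_nat (a $ j) = of_int D * (of_nat (a $ j) * r a)"
          by (simp add: mult_ac)
      qed
      finally show ?thesis .
    qed
    also have "\<dots> = of_int D * (\<Sum>a\<in>T. of_nat (a $ j) * r a)" by (simp add: sum_distrib_left)
    also have "\<dots> = 0" using r2[of j] by simp
    finally show ?thesis by (simp only: of_int_eq_iff of_int_0)
  qed
  define FP where "FP = (\<Sum>a\<in>T. replicate_mset (nat (e a)) a)"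
  define FN where "FN = (\<Sum>a\<in>T. replicate_mset (nat (- e a)) a)"
  have cP: "count FP b = (if b \<in> T then nat (e b) else 0)" for b
    unfolding FP_def count_sum by (simp add: count_replicate_mset fT)
  have cN: "count FN b = (if b \<in> T then nat (- e b) else 0)" for b
    unfolding FN_def count_sum by (simp add: count_replicate_mset fT)
  have PT: "set_mset FP \<subseteq> T"
  proof
    fix b assume "b \<in># FP" then have "count FP b > 0" by simp
    then show "b \<in> T" using cP[of b] by (cases "b \<in> T") auto
  qed
  have NT: "set_mset FN \<subseteq> T"
  proof
    fix b assume "b \<in># FN" then have "count FN b > 0" by simp
    then show "b \<in> T" using cN[of b] by (cases "b \<in> T") auto
  qed
  have szP: "size FP = (\<Sum>a\<in>T. nat (e a))" by (simp add: FP_def)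
  have szN: "size FN = (\<Sum>a\<in>T. nat (- e a))" by (simp add: FN_def)
  have compP: "sum_mset FP $ j = (\<Sum>a\<in>T. nat (e a) * a $ j)" for j
  proof -
    have "sum_mset FP $ j = (\<Sum>a\<in>T. count FP a * a $ j)"
      using sum_mset_comp[of FP j] sum_mset_count_nat[OF fT PT, of "\<lambda>a. a $ j"] by simp
    also have "\<dots> = (\<Sum>a\<in>T. nat (e a) * a $ j)" by (intro sum.cong refl) (simp add: cP)
    finally show ?thesis .
  qed
  have compN: "sum_mset FN $ j = (\<Sum>a\<in>T. nat (- e a) * a $ j)" for j
  proof -
    have "sum_mset FN $ j = (\<Sum>a\<in>T. count FN a * a $ j)"
      using sum_mset_comp[of FN j] sum_mset_count_nat[OF fT NT, of "\<lambda>a. a $ j"] by simp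
    also have "\<dots> = (\<Sum>a\<in>T. nat (- e a) * a $ j)" by (intro sum.cong refl) (simp add: cN)
    finally show ?thesis .
  qed
  have eqs: "sum_mset FP = sum_mset FN"
  proof (rule vec_eq_iff[THEN iffD2], rule allI)
    fix j
    have "int (sum_mset FP $ j) - int (sum_mset FN $ j) = (\<Sum>a\<in>T. (int (nat (e a)) - int (nat (- e a))) * int (a $ j))"
      by (simp add: compP compN of_nat_sum sum_subtractf left_diff_distrib)
    also have "\<dots> = (\<Sum>a\<in>T. e a * int (a $ j))" by (intro sum.cong refl) simp
    also have "\<dots> = 0" by (rule e2)
    finally show "sum_mset FP $ j = sum_mset FN $ j" by simp
  qed
  have szd: "int (size FP) - int (size FN) = D"
  proof -
    have "int (size FP) - int (size FN) = (\<Sum>a\<in>T. int (nat (e a)) - int (nat (- e a)))"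
      by (simp add: szP szN of_nat_sum sum_subtractf)
    also have "\<dots> = (\<Sum>a\<in>T. e a)" by (intro sum.cong refl) simp
    finally show ?thesis using e1 by simp
  qed
  have szne: "size FP \<noteq> size FN"
  proof
    assume "size FP = size FN"
    then have "D = 0" using szd by simp
    then show False using D(1) by simp
  qed
  have "int (size FP) > 0" using szd D(1) by linarith
  then have "size FP > 0" by simp
  then have "FP \<noteq> {#}" by auto
  then obtain a where a: "a \<in># FP" by (rule multiset_nonemptyE)
  have "a \<in> atoms M" by (rule subsetD[OF TA], rule subsetD[OF PT], simp add: a)
  then have a0: "a \<noteq> 0" by (simp add: atoms_def)
  have x0: "sum_mset FP \<noteq> 0"
  proof
    assume "sum_mset FP = 0"
    moreover obtain FP' where "FP = add_mset a FP'" using multi_member_split[OF a] ..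
    ultimately have "a + sum_mset FP' = 0" by simp
    then have "a = 0" by (rule vec_add_eq_0)
    then show False using a0 by simp
  qed
  have fP: "factorization M (sum_mset FP) FP"
    unfolding factorization_def using order_trans[OF PT TA] by simp
  have fN: "factorization M (sum_mset FP) FN"
    unfolding factorization_def using order_trans[OF NT TA] eqs by simp
  have xM: "sum_mset FP \<in> M" using fact_in[OF sm fP] .
  have hh: "\<forall>x\<in>M - {0}. \<forall>F G. factorization M x F \<longrightarrow> factorization M x G \<longrightarrow> size F = size G"
    using h unfolding HFM_def by (rule conjunct2)
  have "sum_mset FP \<in> M - {0}" using xM x0 by simp
  then have "size FP = size FN" using hh fP fN by blast
  then show False using szne by simp
qed

lemma cone_of_0: "0 \<in> cone_of S"
  unfolding cone_of_def by (rule CollectI, rule exI[of _ "{}"]) simp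

lemma cone_of_base: "x \<in> S \<Longrightarrow> x \<in> cone_of S"
  unfolding cone_of_def by (intro CollectI exI[of _ "{x}"] exI[of _ "\<lambda>_. 1"]) simp

lemma cone_of_scale:
  assumes "c \<ge> 0" "y \<in> cone_of S"
  shows "c *\<^sub>R y \<in> cone_of S"
proof -
  obtain T d where T: "finite T" "T \<subseteq> S" "\<forall>x\<in>T. d x \<ge> 0" "y = (\<Sum>x\<in>T. d x *\<^sub>R x)"
    using assms(2) unfolding cone_of_def by blast
  have "c *\<^sub>R y = (\<Sum>x\<in>T. (c * d x) *\<^sub>R x)" using T(4) by (simp add: scaleR_sum_right)
  moreover have "\<forall>x\<in>T. c * d x \<ge> 0" using T(3) assms(1) by simp
  ultimately show ?thesis unfolding cone_of_def
    by (intro CollectI exI[of _ T] exI[of _ "\<lambda>x. c * d x"] conjI T(1) T(2))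
qed

lemma cone_of_add:
  assumes "y \<in> cone_of S" "z \<in> cone_of S"
  shows "y + z \<in> cone_of S"
proof -
  obtain T1 d1 where T1: "finite T1" "T1 \<subseteq> S" "\<forall>x\<in>T1. d1 x \<ge> 0" "y = (\<Sum>x\<in>T1. d1 x *\<^sub>R x)"
    using assms(1) unfolding cone_of_def by blast
  obtain T2 d2 where T2: "finite T2" "T2 \<subseteq> S" "\<forall>x\<in>T2. d2 x \<ge> 0" "z = (\<Sum>x\<in>T2. d2 x *\<^sub>R x)"
    using assms(2) unfolding cone_of_def by blast
  define d where "d x = (if x \<in> T1 then d1 x else 0) + (if x \<in> T2 then d2 x else 0)" for x
  have fin: "finite (T1 \<union> T2)" using T1 T2 by simp
  have "(\<Sum>x\<in>T1 \<union> T2. d x *\<^sub>R x) = (\<Sum>x\<in>T1 \<union> T2. (if x \<in> T1 then d1 x *\<^sub>R x else 0)) + (\<Sum>x\<in>T1 \<union> T2. (if x \<in> T2 then d2 x *\<^sub>R x else 0))"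
    unfolding sum.distrib[symmetric] by (intro sum.cong refl) (simp add: d_def scaleR_add_left)
  also have "\<dots> = (\<Sum>x\<in>(T1 \<union> T2) \<inter> T1. d1 x *\<^sub>R x) + (\<Sum>x\<in>(T1 \<union> T2) \<inter> T2. d2 x *\<^sub>R x)"
    by (simp only: sum.inter_restrict[OF fin])
  also have "\<dots> = y + z" using T1(4) T2(4) by (simp add: Int_absorb1)
  finally have eq: "y + z = (\<Sum>x\<in>T1 \<union> T2. d x *\<^sub>R x)" by simp
  have "\<forall>x\<in>T1 \<union> T2. d x \<ge> 0" using T1(3) T2(3) by (simp add: d_def)
  moreover have "T1 \<union> T2 \<subseteq> S" using T1(2) T2(2) by simp
  ultimately show ?thesis unfolding cone_of_def
    by (intro CollectI exI[of _ "T1 \<union> T2"] exI[of _ d] conjI fin eq)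
qed

lemma convex_cone_of: "convex (cone_of S)"
  unfolding convex_def by (intro ballI allI impI cone_of_add cone_of_scale) auto

lemma cone_cone_of: "cone (cone_of S)"
  unfolding cone_def by (intro ballI allI impI cone_of_scale) auto

lemma cone_of_span:
  assumes "S \<subseteq> span A"
  shows "cone_of S \<subseteq> span A"
proof
  fix y assume "y \<in> cone_of S"
  then obtain T d where T: "finite T" "T \<subseteq> S" "y = (\<Sum>x\<in>T. d x *\<^sub>R x)"
    unfolding cone_of_def by blast
  have "\<forall>x\<in>T. d x *\<^sub>R x \<in> span A" using T(2) assms by (auto intro: span_scale)
  then show "y \<in> span A" unfolding T(3) by (intro span_sum) auto
qed

lemma sum_mset_span:
  assumes "set_mset G \<subseteq> span A"
  shows "sum_mset G \<in> span A"
  using assms by (induction G) (auto intro: span_add span_zero)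

lemma dim_iff:
  fixes M :: "(nat ^ 'n) set"
  assumes sm: "submonoid M" and nz: "M \<noteq> {0}"
  shows "aff_dim (convex hull (emb ` atoms M)) < aff_dim (cone_of (emb ` M)) \<longleftrightarrow>
         0 \<notin> affine hull (emb ` atoms M)"
proof -
  define EA where "EA = emb ` atoms M"
  have sub1: "insert 0 EA \<subseteq> cone_of (emb ` M)"
  proof
    fix v assume "v \<in> insert 0 EA"
    then show "v \<in> cone_of (emb ` M)"
    proof
      assume "v = 0" then show ?thesis by (simp add: cone_of_0)
    next
      assume "v \<in> EA"
      then obtain a where "a \<in> atoms M" "v = emb a" unfolding EA_def by auto
      then show ?thesis using atoms_sub by (intro cone_of_base) auto
    qed
  qed
  have "emb ` M \<subseteq> span EA"
  proof
    fix v assume "v \<in> emb ` M"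
    then obtain m where m: "m \<in> M" "v = emb m" by auto
    obtain F where F: "factorization M m F" using atomic[OF sm m(1)] ..
    have "set_mset (image_mset emb F) \<subseteq> span EA"
      using F unfolding factorization_def EA_def by (auto intro: span_base)
    then have "sum_mset (image_mset emb F) \<in> span EA" by (rule sum_mset_span)
    then show "v \<in> span EA" using F m(2) emb_sum_mset[of F] by (simp add: factorization_def)
  qed
  then have sub2: "cone_of (emb ` M) \<subseteq> span EA" by (rule cone_of_span)
  have "affine hull (insert 0 EA) = span (insert 0 EA)"
    by (rule affine_hull_span_0) (simp add: hull_inc)
  then have ah: "affine hull (insert 0 EA) = span EA" by (simp add: span_insert_0)
  have "aff_dim (cone_of (emb ` M)) \<le> aff_dim (span EA)" by (rule aff_dim_subset[OF sub2])
  also have "\<dots> = aff_dim (insert 0 EA)" unfolding ah[symmetric] by (rule aff_dim_affine_hull)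
  finally have "aff_dim (cone_of (emb ` M)) = aff_dim (insert 0 EA)"
    using aff_dim_subset[OF sub1] by simp
  then show ?thesis
    by (simp add: EA_def aff_dim_convex_hull aff_dim_insert)
qed

lemma face_half:
  fixes F C :: "'a::real_vector set"
  assumes fo: "F face_of C" and cF: "cone F" and cC: "cone C"
    and p: "p \<in> C" and q: "q \<in> C" and pq: "p + q \<in> F"
  shows "p \<in> F"
proof (cases "p = q")
  case True
  have "(1/2::real) *\<^sub>R (p + q) \<in> F" using cF pq unfolding cone_def by simp
  moreover have "(1/2::real) *\<^sub>R (p + q) = p" using True by (simp add: scaleR_2[symmetric])
  ultimately show ?thesis by simp
next
  case False
  have p2: "(2::real) *\<^sub>R p \<in> C" and q2: "(2::real) *\<^sub>R q \<in> C" using cC p q unfolding cone_def by auto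
  have ne: "(2::real) *\<^sub>R p \<noteq> (2::real) *\<^sub>R q" using False by simp
  have "midpoint ((2::real) *\<^sub>R p) ((2::real) *\<^sub>R q) = p + q"
    by (simp add: midpoint_def scaleR_add_right[symmetric])
  then have "p + q \<in> open_segment ((2::real) *\<^sub>R p) ((2::real) *\<^sub>R q)"
    using midpoint_in_open_segment[of "(2::real) *\<^sub>R p" "(2::real) *\<^sub>R q"] ne by simp
  then have "(2::real) *\<^sub>R p \<in> F" using face_ofD[OF fo _ p2 q2 pq] by simp
  then have "(1/2::real) *\<^sub>R ((2::real) *\<^sub>R p) \<in> F"
    using cF[unfolded cone_def, rule_format, of "(2::real) *\<^sub>R p" "1/2"] by simp
  then show ?thesis by simp
qed

lemma face_submonoid_hfm:
  fixes M :: "(nat ^ 'n) set"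
  assumes sm: "submonoid M" and h: "HFM M" and fs: "face_submonoid N M"
  shows "HFM N"
proof -
  define C where "C = cone_of (emb ` M)"
  obtain F where cf: "cone_face F C" and N: "N = {x \<in> M. emb x \<in> F}"
    using fs unfolding face_submonoid_def C_def by auto
  have Fne: "F \<noteq> {}" and cF: "cone F" and fo: "F face_of C"
    using cf unfolding cone_face_def by auto
  have cvF: "convex F" using fo by (rule face_of_imp_convex)
  have cC: "cone C" unfolding C_def by (rule cone_cone_of)
  have embC: "emb m \<in> C" if "m \<in> M" for m
    unfolding C_def using that by (intro cone_of_base) auto
  have fprop: "x \<in> N" if "x \<in> M" "y \<in> M" "x + y \<in> N" for x y
  proof -
    have "emb x + emb y \<in> F" using that(3) N by (simp add: emb_add)
    then have "emb x \<in> F" by (rule face_half[OF fo cF cC embC[OF that(1)] embC[OF that(2)]])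
    then show ?thesis using that(1) N by simp
  qed
  have NM: "N \<subseteq> M" using N by auto
  have smN: "submonoid N"
    unfolding submonoid_def
  proof (intro conjI ballI)
    obtain z where "z \<in> F" using Fne by auto
    then have "0 \<in> F" using cF[unfolded cone_def, rule_format, of z 0] by simp
    then show "0 \<in> N" using N sm by (simp add: submonoid_def)
  next
    fix x y assume xy: "x \<in> N" "y \<in> N"
    then have ex: "emb x \<in> F" and ey: "emb y \<in> F" using N by auto
    have "(1/2::real) *\<^sub>R emb x + (1/2::real) *\<^sub>R emb y \<in> F"
      using convexD[OF cvF ex ey, of "1/2" "1/2"] by simp
    then have "(2::real) *\<^sub>R ((1/2::real) *\<^sub>R emb x + (1/2::real) *\<^sub>R emb y) \<in> F"
      using cF[unfolded cone_def, rule_format, of "(1/2::real) *\<^sub>R emb x + (1/2::real) *\<^sub>R emb y" 2] by simp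
    then have "emb x + emb y \<in> F" by (simp add: scaleR_add_right)
    then have "emb (x + y) \<in> F" by (simp add: emb_add)
    moreover have "x + y \<in> M" using xy NM sm by (auto simp: submonoid_def)
    ultimately show "x + y \<in> N" using N by simp
  qed
  have atN: "atoms N \<subseteq> atoms M"
  proof
    fix a assume a: "a \<in> atoms N"
    have aN: "a \<in> N" "a \<noteq> 0" using a by (auto simp: atoms_def)
    have "\<not> (\<exists>x\<in>M - {0}. \<exists>y\<in>M - {0}. a = x + y)"
    proof
      assume "\<exists>x\<in>M - {0}. \<exists>y\<in>M - {0}. a = x + y"
      then obtain x y where xy: "x \<in> M - {0}" "y \<in> M - {0}" "a = x + y" by auto
      have xN: "x \<in> N" using fprop[of x y] xy aN by simp
      have yN: "y \<in> N" using fprop[of y x] xy aN by (simp add: add.commute)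
      have "\<exists>x\<in>N - {0}. \<exists>y\<in>N - {0}. a = x + y" using xN yN xy by auto
      then show False using a by (simp add: atoms_def)
    qed
    then show "a \<in> atoms M" using aN NM by (auto simp: atoms_def)
  qed
  have hh: "\<forall>x\<in>M - {0}. \<forall>F G. factorization M x F \<longrightarrow> factorization M x G \<longrightarrow> size F = size G"
    using h unfolding HFM_def by (rule conjunct2)
  have fNM: "factorization M x G" if "factorization N x G" for x G
    using that atN unfolding factorization_def by auto
  have un: "\<forall>x\<in>N - {0}. \<forall>G1 G2. factorization N x G1 \<longrightarrow> factorization N x G2 \<longrightarrow> size G1 = size G2"
  proof (intro ballI allI impI)
    fix x G1 G2 assume x: "x \<in> N - {0}" and g1: "factorization N x G1" and g2: "factorization N x G2"
    have "x \<in> M - {0}" using x NM by auto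
    then show "size G1 = size G2" by (rule hh[rule_format, OF _ fNM[OF g1] fNM[OF g2]])
  qed
  have ex: "\<forall>x\<in>N. \<exists>G. factorization N x G" using atomic[OF smN] by simp
  show ?thesis unfolding HFM_def using ex un by (rule conjI)
qed

lemma self_face_submonoid:
  fixes M :: "(nat ^ 'n) set"
  shows "face_submonoid M M"
proof -
  define C where "C = cone_of (emb ` M)"
  have 1: "cone_face C (cone_of (emb ` M))"
    unfolding cone_face_def C_def
    using cone_of_0 cone_cone_of face_of_refl[OF convex_cone_of] by auto
  have 2: "M = {x \<in> M. emb x \<in> C}"
    unfolding C_def by (auto intro: cone_of_base)
  show ?thesis unfolding face_submonoid_def by (rule exI[of _ C], rule conjI[OF 1 2])
qed

theorem mainTheorem8:
  fixes M :: "(nat ^ 'n) set"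
  assumes "submonoid M" and "M \<noteq> {0}"
  shows "(HFM M \<longleftrightarrow> (\<forall>N. face_submonoid N M \<longrightarrow> HFM N)) \<and>
         (HFM M \<longleftrightarrow> aff_dim (convex hull (emb ` atoms M)) < aff_dim (cone_of (emb ` M)))"
proof
  show "HFM M \<longleftrightarrow> (\<forall>N. face_submonoid N M \<longrightarrow> HFM N)"
  proof
    assume "HFM M"
    then show "\<forall>N. face_submonoid N M \<longrightarrow> HFM N"
      using face_submonoid_hfm[OF assms(1) \<open>HFM M\<close>] by simp
  next
    assume "\<forall>N. face_submonoid N M \<longrightarrow> HFM N"
    then show "HFM M" using self_face_submonoid[of M] by simp
  qed
next
  have "HFM M \<longleftrightarrow> 0 \<notin> affine hull (emb ` atoms M)"
  proof
    assume "HFM M" then show "0 \<notin> affine hull (emb ` atoms M)" by (rule not_aff_of_hfm[OF assms(1)])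
  next
    assume "0 \<notin> affine hull (emb ` atoms M)" then show "HFM M" by (rule hfm_of_not_aff[OF assms(1)])
  qed
  then show "HFM M \<longleftrightarrow> aff_dim (convex hull (emb ` atoms M)) < aff_dim (cone_of (emb ` M))"
    using dim_iff[OF assms] by simp
qed

end
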